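(* Let $g(t)$, $t\in[0,T)$, be the maximal Ricci flow solution on $S^1\times S^3$ of the form $g(t)=\phi^2dz^2+a^2\omega^1\otimes\omega^1+b^2\omega^2\otimes\omega^2+c^2\omega^3\otimes\omega^3$ starting from initial data with $0<a\le b\le c$, and let $\hat c(t)=\max_s c(s,t)$. Then the singular time satisfies $T\le \frac{\hat c(0)^2}{4}$.
   Context: $S^3=SU(2)$ carries a global left-invariant frame $E_1,E_2,E_3$ with $[E_i,E_j]=-2\epsilon_{ijk}E_k$ and dual coframe $\omega^i$; $z\in S^1=[0,2\pi)$, $\phi,a,b,c$ positive smooth $2\pi$-periodic functions; $s$ is the arclength coordinate $ds=\phi\,dz$. The Ricci flow $\partial_tg=-2\mathrm{Ric}(g)$ preserves this form. *)

theory Defs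
  imports "HOL-Analysis.Analysis"
begin

(* Functions of (z,t): z in R (2pi-periodic, i.e. on S^1), t in [0,T). *)

definition dz :: "(real \<Rightarrow> real \<Rightarrow> real) \<Rightarrow> real \<Rightarrow> real \<Rightarrow> real" where
  "dz f z t = deriv (\<lambda>x. f x t) z"

definition dt :: "real \<Rightarrow> (real \<Rightarrow> real \<Rightarrow> real) \<Rightarrow> real \<Rightarrow> real \<Rightarrow> real" where
  "dt T f z t = vector_derivative (\<lambda>s. f z s) (at t within {0..<T})"

fun iterd :: "real \<Rightarrow> bool list \<Rightarrow> (real \<Rightarrow> real \<Rightarrow> real) \<Rightarrow> real \<Rightarrow> real \<Rightarrow> real" where
  "iterd T [] f = f"
| "iterd T (True # w) f = dz (iterd T w f)"
| "iterd T (False # w) f = dt T (iterd T w f)"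

definition smooth_RT :: "real \<Rightarrow> (real \<Rightarrow> real \<Rightarrow> real) \<Rightarrow> bool" where
  "smooth_RT T f \<longleftrightarrow> (\<forall>w.
      continuous_on (UNIV \<times> {0..<T}) (\<lambda>p. iterd T w f (fst p) (snd p)) \<and>
      (\<forall>z. \<forall>t\<in>{0..<T}. (\<lambda>x. iterd T w f x t) differentiable (at z) \<and>
                         (\<lambda>s. iterd T w f z s) differentiable (at t within {0..<T})))"

definition ds :: "(real \<Rightarrow> real \<Rightarrow> real) \<Rightarrow> (real \<Rightarrow> real \<Rightarrow> real) \<Rightarrow> real \<Rightarrow> real \<Rightarrow> real" where
  "ds \<phi> f z t = dz f z t / \<phi> z t"

(* Ricci flow of g = phi^2 dz^2 + a^2 w1^2 + b^2 w2^2 + c^2 w3^2 on S^1 x S^3,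
   written as the equivalent PDE system for (phi,a,b,c) with [E_i,E_j] = -2 eps_ijk E_k. *)
definition RF_solution ::
  "real \<Rightarrow> (real \<Rightarrow> real \<Rightarrow> real) \<Rightarrow> (real \<Rightarrow> real \<Rightarrow> real) \<Rightarrow> (real \<Rightarrow> real \<Rightarrow> real)
   \<Rightarrow> (real \<Rightarrow> real \<Rightarrow> real) \<Rightarrow> bool" where
  "RF_solution T \<phi> a b c \<longleftrightarrow>
     smooth_RT T \<phi> \<and> smooth_RT T a \<and> smooth_RT T b \<and> smooth_RT T c \<and>
     (\<forall>z. \<forall>t\<in>{0..<T}.
        \<phi> (z + 2*pi) t = \<phi> z t \<and> a (z + 2*pi) t = a z t \<and>
        b (z + 2*pi) t = b z t \<and> c (z + 2*pi) t = c z t \<and>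
        0 < \<phi> z t \<and> 0 < a z t \<and> 0 < b z t \<and> 0 < c z t \<and>
        dt T a z t = ds \<phi> (ds \<phi> a) z t
            + ds \<phi> a z t * (ds \<phi> b z t / b z t + ds \<phi> c z t / c z t)
            - 2 * ((a z t)^4 - ((b z t)^2 - (c z t)^2)^2) / (a z t * (b z t)^2 * (c z t)^2) \<and>
        dt T b z t = ds \<phi> (ds \<phi> b) z t
            + ds \<phi> b z t * (ds \<phi> a z t / a z t + ds \<phi> c z t / c z t)
            - 2 * ((b z t)^4 - ((a z t)^2 - (c z t)^2)^2) / ((a z t)^2 * b z t * (c z t)^2) \<and>
        dt T c z t = ds \<phi> (ds \<phi> c) z t
            + ds \<phi> c z t * (ds \<phi> a z t / a z t + ds \<phi> b z t / b z t)
            - 2 * ((c z t)^4 - ((a z t)^2 - (b z t)^2)^2) / ((a z t)^2 * (b z t)^2 * c z t) \<and>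
        dt T \<phi> z t = \<phi> z t * (ds \<phi> (ds \<phi> a) z t / a z t
            + ds \<phi> (ds \<phi> b) z t / b z t + ds \<phi> (ds \<phi> c) z t / c z t))"

end

theory Submission
  imports Defs
begin

lemma alg_ineq:
  fixes X Y W :: real
  assumes "0 < Y" "Y \<le> X" "0 < W" "W \<le> X"
  shows "Y^2 * W^2 \<le> X^4 - (Y^2 - W^2)^2"
proof -
  have p: "Y^2 \<le> X^2" "W^2 \<le> X^2" using assms by (simp_all add: power_mono)
  have "Y^4 \<le> X^4" "W^4 \<le> X^4" using assms by (simp_all add: power_mono)
  show ?thesis
  proof (cases "W \<le> Y")
    case True
    then have "W^2 \<le> Y^2" using assms by (simp add: power_mono)
    then have "W^2 * W^2 \<le> Y^2 * W^2" using assms by (intro mult_right_mono) auto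
    then show ?thesis using \<open>Y^4 \<le> X^4\<close> by (simp add: power2_eq_square power4_eq_xxxx algebra_simps)
  next
    case False
    then have "Y^2 \<le> W^2" using assms by (simp add: power_mono)
    then have "Y^2 * Y^2 \<le> Y^2 * W^2" using assms by (intro mult_left_mono) auto
    then show ?thesis using \<open>W^4 \<le> X^4\<close> by (simp add: power2_eq_square power4_eq_xxxx algebra_simps)
  qed
qed

lemma key_contra:
  fixes T tp zp \<delta> \<epsilon> K D :: real and \<phi> X Y W :: "real \<Rightarrow> real \<Rightarrow> real"
  assumes sX: "smooth_RT T X" and sP: "smooth_RT T \<phi>"
    and tp: "0 < tp" "tp < T"
    and pos: "0 < \<phi> zp tp" "0 < X zp tp" "0 < Y zp tp" "0 < W zp tp"
    and ord: "Y zp tp \<le> X zp tp" "W zp tp \<le> X zp tp"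
    and Dd: "D = X zp tp * (Y zp tp)^2 * (W zp tp)^2"
    and pde: "dt T X zp tp = ds \<phi> (ds \<phi> X) zp tp + ds \<phi> X zp tp * K
              - 2 * ((X zp tp)^4 - ((Y zp tp)^2 - (W zp tp)^2)^2) / D"
    and \<delta>: "0 < \<delta>"
    and lmax: "\<forall>z. \<bar>zp - z\<bar> < \<delta> \<longrightarrow> X z tp \<le> X zp tp"
    and left: "\<forall>s. 0 < s \<and> s < tp \<longrightarrow> (X zp s)^2 + (4 - \<epsilon>) * s \<le> (X zp tp)^2 + (4 - \<epsilon>) * tp"
    and \<epsilon>: "0 < \<epsilon>"
  shows False
proof -
  have t0in: "tp \<in> {0..<T}" using tp by auto
  have sm: "\<And>w. (\<forall>z. \<forall>t\<in>{0..<T}. (\<lambda>x. iterd T w X x t) differentiable (at z) \<and>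
                         (\<lambda>s. iterd T w X z s) differentiable (at t within {0..<T}))"
    using sX unfolding smooth_RT_def by blast
  have dX: "\<And>z. (\<lambda>x. X x tp) differentiable (at z)"
    using sm[of "[]"] t0in by simp
  have dtX: "(\<lambda>s. X zp s) differentiable (at tp within {0..<T})"
    using sm[of "[]"] t0in by simp
  have ddX: "(\<lambda>x. dz X x tp) differentiable (at zp)"
    using sm[of "[True]"] t0in by simp
  have dP: "(\<lambda>x. \<phi> x tp) differentiable (at zp)"
    using sP t0in unfolding smooth_RT_def by (metis iterd.simps(1))
  define f where "f = (\<lambda>x. X x tp)"
  define g where "g = (\<lambda>x. dz X x tp)"
  have fder: "\<And>z. DERIV f z :> g z"
    unfolding f_def g_def dz_def using dX DERIV_deriv_iff_real_differentiable by blast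
  have gder: "DERIV g zp :> dz (dz X) zp tp"
    unfolding g_def dz_def[of "dz X"] using ddX DERIV_deriv_iff_real_differentiable
    unfolding g_def by blast
  have g0: "g zp = 0"
    by (rule DERIV_local_max[OF fder \<delta>]) (use lmax f_def in auto)
  have g'le: "dz (dz X) zp tp \<le> 0"
  proof (rule ccontr)
    assume "\<not> ?thesis"
    then obtain d where d: "d > 0" "\<forall>h>0. h < d \<longrightarrow> g zp < g (zp + h)"
      using DERIV_pos_inc_right[OF gder] by force
    define h where "h = min d \<delta> / 2"
    have h: "0 < h" "h < d" "h < \<delta>" using d \<delta> by (auto simp: h_def)
    obtain \<xi> where \<xi>: "zp < \<xi>" "\<xi> < zp + h" "f (zp + h) - f zp = (zp + h - zp) * g \<xi>"
      using MVT2[of zp "zp + h" f g] fder h by auto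
    have "g \<xi> > 0" using d(2)[rule_format, of "\<xi> - zp"] \<xi> h g0 by auto
    then have "h * g \<xi> > 0" using h by simp
    then have "f (zp + h) > f zp" using \<xi> by simp
    moreover have "f (zp + h) \<le> f zp" using lmax h unfolding f_def by auto
    ultimately show False by simp
  qed
  have pder: "DERIV (\<lambda>x. \<phi> x tp) zp :> dz \<phi> zp tp"
    unfolding dz_def using dP DERIV_deriv_iff_real_differentiable by blast
  have qder: "DERIV (\<lambda>x. dz X x tp / \<phi> x tp) zp :>
      (dz (dz X) zp tp * \<phi> zp tp - dz X zp tp * dz \<phi> zp tp) / (\<phi> zp tp)^2"
    using DERIV_divide[OF gder[unfolded g_def] pder] pos by (simp add: power2_eq_square)
  have dsds: "ds \<phi> (ds \<phi> X) zp tp = dz (dz X) zp tp / (\<phi> zp tp)^2"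
  proof -
    have "dz (ds \<phi> X) zp tp = (dz (dz X) zp tp * \<phi> zp tp - dz X zp tp * dz \<phi> zp tp) / (\<phi> zp tp)^2"
      unfolding dz_def[of "ds \<phi> X"] ds_def using DERIV_imp_deriv[OF qder] by simp
    then show ?thesis using g0 pos unfolding ds_def g_def by (simp add: power2_eq_square)
  qed
  have dsX: "ds \<phi> X zp tp = 0" using g0 unfolding ds_def g_def by simp
  have S: "ds \<phi> (ds \<phi> X) zp tp \<le> 0" using dsds g'le pos(1) by (simp add: divide_nonpos_nonneg)
  have tv: "((\<lambda>s. X zp s) has_real_derivative dt T X zp tp) (at tp within {0..<T})"
    using dtX unfolding dt_def has_real_derivative_iff_has_vector_derivative
    using vector_derivative_works by blast
  have "((\<lambda>s. X zp s) has_real_derivative dt T X zp tp) (at tp within {0<..<T})"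
    by (rule DERIV_subset[OF tv]) auto
  then have tv2: "((\<lambda>s. X zp s) has_real_derivative dt T X zp tp) (at tp)"
    using at_within_open[of tp "{0<..<T}"] tp by auto
  have hder: "((\<lambda>s. (X zp s)^2 + (4 - \<epsilon>) * s) has_real_derivative
        (2 * X zp tp * dt T X zp tp + (4 - \<epsilon>))) (at tp)"
    by (auto intro!: derivative_eq_intros tv2)
  have hge: "2 * X zp tp * dt T X zp tp + (4 - \<epsilon>) \<ge> 0"
  proof (rule ccontr)
    assume "\<not> ?thesis"
    then obtain d where d: "d > 0" "\<forall>h>0. h < d \<longrightarrow>
        (X zp tp)^2 + (4 - \<epsilon>) * tp < (X zp (tp - h))^2 + (4 - \<epsilon>) * (tp - h)"
      using DERIV_neg_dec_left[OF hder] by force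
    define h where "h = min d tp / 2"
    have h: "0 < h" "h < d" "h < tp" using d tp by (auto simp: h_def)
    show False using d(2)[rule_format, of h] h left[rule_format, of "tp - h"] by auto
  qed
  have R: "(Y zp tp)^2 * (W zp tp)^2 \<le> (X zp tp)^4 - ((Y zp tp)^2 - (W zp tp)^2)^2"
    using alg_ineq pos ord by blast
  have Dpos: "D > 0" using Dd pos by simp
  have "2 * X zp tp * dt T X zp tp = 2 * X zp tp * ds \<phi> (ds \<phi> X) zp tp
      - 4 * ((X zp tp)^4 - ((Y zp tp)^2 - (W zp tp)^2)^2) / ((Y zp tp)^2 * (W zp tp)^2)"
    using pde dsX Dd pos by (simp add: field_simps power2_eq_square)
  also have "\<dots> \<le> - 4 * ((Y zp tp)^2 * (W zp tp)^2) / ((Y zp tp)^2 * (W zp tp)^2)"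
  proof -
    have a: "2 * X zp tp * ds \<phi> (ds \<phi> X) zp tp \<le> 0" using S pos
      by (simp add: mult_nonneg_nonpos)
    have b: "4 * ((Y zp tp)^2 * (W zp tp)^2) / ((Y zp tp)^2 * (W zp tp)^2)
        \<le> 4 * ((X zp tp)^4 - ((Y zp tp)^2 - (W zp tp)^2)^2) / ((Y zp tp)^2 * (W zp tp)^2)"
      using R pos by (intro divide_right_mono) auto
    show ?thesis using a b by simp
  qed
  also have "\<dots> = -4" using pos by simp
  finally show False using hge \<epsilon> by simp
qed

lemma left_limit_le:
  fixes f :: "real \<Rightarrow> real"
  assumes c: "continuous_on {0..t0} f" and t0: "0 < t0"
    and lt: "\<forall>s. 0 \<le> s \<and> s < t0 \<longrightarrow> f s < L"
  shows "f t0 \<le> L"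
proof -
  have "(f \<longlongrightarrow> f t0) (at t0 within {0..t0})"
    using c t0 unfolding continuous_on_def by auto
  then have l: "(f \<longlongrightarrow> f t0) (at t0 within {0..<t0})"
    by (rule tendsto_within_subset) auto
  have ev: "eventually (\<lambda>s. L \<ge> f s) (at t0 within {0..<t0})"
    unfolding eventually_at_filter using lt by (auto intro!: always_eventually less_imp_le)
  have nt: "\<not> trivial_limit (at t0 within {0..<t0})"
    unfolding trivial_limit_within using t0 by simp
  show ?thesis by (rule tendsto_upperbound[OF l ev nt])
qed

theorem corollary4p4:
  fixes T :: real and \<phi> a b c :: "real \<Rightarrow> real \<Rightarrow> real"
  assumes "0 < T"
    and "RF_solution T \<phi> a b c"
    and "\<forall>z. a z 0 \<le> b z 0 \<and> b z 0 \<le> c z 0"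
  shows "T \<le> (SUP z\<in>{0..2*pi}. c z 0)^2 / 4"
proof -
  note RF = assms(2)[unfolded RF_solution_def]
  have sm: "smooth_RT T \<phi>" "smooth_RT T a" "smooth_RT T b" "smooth_RT T c" using RF by (simp_all only:)
  note big = RF[THEN conjunct2, THEN conjunct2, THEN conjunct2, THEN conjunct2]
  have pt: "
        \<phi> (z + 2*pi) t = \<phi> z t \<and> a (z + 2*pi) t = a z t \<and>
        b (z + 2*pi) t = b z t \<and> c (z + 2*pi) t = c z t \<and>
        0 < \<phi> z t \<and> 0 < a z t \<and> 0 < b z t \<and> 0 < c z t" if "t \<in> {0..<T}" for z t
    using big[rule_format, OF that, of z] by (elim conjE) (intro conjI; assumption)
  define F where "F = {a, b, c}"
  have smF: "\<And>x. x \<in> F \<Longrightarrow> smooth_RT T x" using sm F_def by auto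
  have perF: "\<And>x z t. x \<in> F \<Longrightarrow> t \<in> {0..<T} \<Longrightarrow> x (z + 2*pi) t = x z t"
    using pt F_def by auto
  have posF: "\<And>x z t. x \<in> F \<Longrightarrow> t \<in> {0..<T} \<Longrightarrow> 0 < x z t"
    using pt F_def by auto
  have le0F: "\<And>x z. x \<in> F \<Longrightarrow> x z 0 \<le> c z 0"
  proof -
    fix x z assume "x \<in> F"
    then have "x = a \<or> x = b \<or> x = c" by (simp add: F_def)
    moreover have "a z 0 \<le> b z 0" "b z 0 \<le> c z 0" using assms(3) by blast+
    ultimately show "x z 0 \<le> c z 0" by auto
  qed
  have contF: "\<And>x. x \<in> F \<Longrightarrow> continuous_on (UNIV \<times> {0..<T}) (\<lambda>p. x (fst p) (snd p))"
  proof -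
    fix x assume "x \<in> F"
    then have "smooth_RT T x" by (rule smF)
    then show "continuous_on (UNIV \<times> {0..<T}) (\<lambda>p. x (fst p) (snd p))"
      unfolding smooth_RT_def by (metis iterd.simps(1))
  qed
  define C0 where "C0 = (SUP z\<in>{0..2*pi}. c z 0)"
  define m0 where "m0 = C0^2"
  have cc0: "continuous_on {0..2*pi} (\<lambda>z. c z 0)"
  proof -
    have "continuous_on {0..2*pi} (\<lambda>z. (\<lambda>p. c (fst p) (snd p)) (z, 0::real))"
      by (rule continuous_on_compose2[OF contF[of c]]) (auto simp: F_def assms(1) intro!: continuous_intros)
    then show ?thesis by simp
  qed
  have bdd: "bdd_above ((\<lambda>z. c z 0) ` {0..2*pi})"
    by (rule bounded_imp_bdd_above, rule compact_imp_bounded, rule compact_continuous_image[OF cc0]) auto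
  have c0le: "\<And>z. z \<in> {0..2*pi} \<Longrightarrow> c z 0 \<le> C0"
    unfolding C0_def using bdd by (rule cSUP_upper2) auto
  have init: "\<And>x z. x \<in> F \<Longrightarrow> z \<in> {0..2*pi} \<Longrightarrow> (x z 0)^2 \<le> m0"
  proof -
    fix x z assume xF: "x \<in> F" and z: "z \<in> {0..2*pi}"
    have "0 \<le> x z 0" using posF[OF xF, of 0 z] assms(1) by (simp add: less_imp_le)
    moreover have "x z 0 \<le> C0" using le0F[OF xF] c0le[OF z] by (rule order_trans)
    ultimately show "(x z 0)^2 \<le> m0" unfolding m0_def by (simp add: power_mono)
  qed
  have claim: "\<And>\<epsilon> t1 z1. 0 < \<epsilon> \<Longrightarrow> t1 \<in> {0..<T} \<Longrightarrow> z1 \<in> {0..2*pi} \<Longrightarrow>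
                  (c z1 t1)^2 + (4 - \<epsilon>) * t1 < m0 + \<epsilon>"
  proof (rule ccontr)
    fix \<epsilon> t1 z1
    assume \<epsilon>: "0 < \<epsilon>" and t1: "t1 \<in> {0..<T}" and z1: "z1 \<in> {0..2*pi}"
      and bad: "\<not> (c z1 t1)^2 + (4 - \<epsilon>) * t1 < m0 + \<epsilon>"
    define Q where "Q = (\<lambda>x p. (x (fst p) (snd p))^2 + (4 - \<epsilon>) * snd (p::real\<times>real))"
    define S where "S = {0..2*pi} \<times> {0..t1}"
    define KK where "KK = (\<lambda>x. S \<inter> Q x -` {m0 + \<epsilon>..})"
    define K where "K = KK a \<union> KK b \<union> KK c"
    have cS: "compact S" unfolding S_def by (intro compact_Times compact_Icc)
    have ST: "S \<subseteq> UNIV \<times> {0..<T}" using t1 unfolding S_def by auto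
    have contQ: "\<And>x. x \<in> F \<Longrightarrow> continuous_on S (Q x)"
    proof -
      fix x assume "x \<in> F"
      have "continuous_on S (\<lambda>p. x (fst p) (snd p))"
        by (rule continuous_on_subset[OF contF[OF \<open>x \<in> F\<close>] ST])
      then show "continuous_on S (Q x)" unfolding Q_def by (intro continuous_intros)
    qed
    have cKK: "\<And>x. x \<in> F \<Longrightarrow> compact (KK x)"
    proof -
      fix x assume "x \<in> F"
      have "closed (KK x)" unfolding KK_def
        by (rule continuous_closed_preimage[OF contQ[OF \<open>x \<in> F\<close>]])
           (use cS compact_imp_closed in auto)
      then have "compact (S \<inter> KK x)" using cS by blast
      moreover have "S \<inter> KK x = KK x" unfolding KK_def by auto
      ultimately show "compact (KK x)" by simp
    qed
    have cK: "compact K" unfolding K_def using cKK F_def by (intro compact_Un) auto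
    have "(z1, t1) \<in> K" using bad z1 t1 unfolding K_def KK_def S_def Q_def by auto
    then have Kne: "K \<noteq> {}" by auto
    obtain p where pK: "p \<in> K" and pmin: "\<forall>q\<in>K. snd p \<le> snd q"
      using continuous_attains_inf[OF cK Kne continuous_on_snd[OF continuous_on_id]] by auto
    obtain zs ts where p: "p = (zs, ts)" by fastforce
    obtain X where XF: "X \<in> F" and pX: "p \<in> KK X" using pK unfolding K_def F_def by auto
    have zs: "zs \<in> {0..2*pi}" and ts01: "0 \<le> ts" "ts \<le> t1" using pX p unfolding KK_def S_def by auto
    have tsT: "ts < T" using ts01 t1 by auto
    have QX: "Q X (zs, ts) \<ge> m0 + \<epsilon>" using pX p unfolding KK_def by auto
    have before: "\<And>x z s. x \<in> F \<Longrightarrow> z \<in> {0..2*pi} \<Longrightarrow> 0 \<le> s \<Longrightarrow> s < ts \<Longrightarrow> Q x (z, s) < m0 + \<epsilon>"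
    proof (rule ccontr)
      fix x z s assume xF: "x \<in> F" and z: "z \<in> {0..2*pi}" and s: "0 \<le> s" "s < ts"
        and nb: "\<not> Q x (z, s) < m0 + \<epsilon>"
      have "(z, s) \<in> KK x" using z s ts01 nb unfolding KK_def S_def by auto
      then have "(z, s) \<in> K" using xF unfolding K_def F_def by auto
      then show False using pmin p s by force
    qed
    have tspos: "0 < ts"
    proof (rule ccontr)
      assume "\<not> 0 < ts"
      then have "ts = 0" using ts01 by simp
      then have "Q X (zs, ts) = (X zs 0)^2" unfolding Q_def by simp
      also have "\<dots> \<le> m0" using init[OF XF zs] .
      finally show False using QX \<epsilon> by simp
    qed
    have att: "\<And>x z. x \<in> F \<Longrightarrow> z \<in> {0..2*pi} \<Longrightarrow> Q x (z, ts) \<le> m0 + \<epsilon>"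
    proof -
      fix x z assume xF: "x \<in> F" and z: "z \<in> {0..2*pi}"
      have c1: "continuous_on {0..ts} (\<lambda>s. (z, s))" by (intro continuous_intros)
      have c2: "(\<lambda>s. (z, s)) ` {0..ts} \<subseteq> S" using z ts01 unfolding S_def by auto
      have "continuous_on {0..ts} (\<lambda>s. Q x (z, s))"
        using continuous_on_compose2[OF contQ[OF xF] c1 c2] .
      moreover have "\<forall>s. 0 \<le> s \<and> s < ts \<longrightarrow> Q x (z, s) < m0 + \<epsilon>"
        using before[OF xF z] by blast
      ultimately show "Q x (z, ts) \<le> m0 + \<epsilon>"
        using left_limit_le[OF _ tspos] by blast
    qed
    have tsin: "ts \<in> {0..<T}" using ts01 tsT by auto
    have cmpz: "\<And>x. x \<in> F \<Longrightarrow> x zs ts \<le> X zs ts"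
    proof -
      fix x assume xF: "x \<in> F"
      have "Q x (zs, ts) \<le> Q X (zs, ts)" using att[OF xF zs] QX by simp
      then have "(x zs ts)^2 \<le> (X zs ts)^2" unfolding Q_def by simp
      then show "x zs ts \<le> X zs ts" using posF[OF XF tsin] by (metis power2_le_imp_le less_imp_le)
    qed
    have cmpin: "\<And>z. z \<in> {0..2*pi} \<Longrightarrow> X z ts \<le> X zs ts"
    proof -
      fix z assume z: "z \<in> {0..2*pi}"
      have "Q X (z, ts) \<le> Q X (zs, ts)" using att[OF XF z] QX by simp
      then have "(X z ts)^2 \<le> (X zs ts)^2" unfolding Q_def by simp
      then show "X z ts \<le> X zs ts" using posF[OF XF tsin] by (metis power2_le_imp_le less_imp_le)
    qed
    have lmax: "\<forall>z. \<bar>zs - z\<bar> < 1 \<longrightarrow> X z ts \<le> X zs ts"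
    proof (intro allI impI)
      fix z assume zz: "\<bar>zs - z\<bar> < 1"
      have pi4: "1 < 2 * pi" using pi_gt3 by simp
      show "X z ts \<le> X zs ts"
      proof (cases "z < 0")
        case True
        then have "z + 2*pi \<in> {0..2*pi}" using zz zs pi4 by auto
        then have "X (z + 2*pi) ts \<le> X zs ts" by (rule cmpin)
        then show ?thesis using perF[OF XF tsin, of z] by simp
      next
        case False
        show ?thesis
        proof (cases "z \<le> 2*pi")
          case True then show ?thesis using cmpin False by simp
        next
          case F2: False
          then have "z - 2*pi \<in> {0..2*pi}" using zz zs pi4 by auto
          then have "X (z - 2*pi) ts \<le> X zs ts" by (rule cmpin)
          then show ?thesis using perF[OF XF tsin, of "z - 2*pi"] by simp
        qed
      qed
    qed
    have left: "\<forall>s. 0 < s \<and> s < ts \<longrightarrow> (X zs s)^2 + (4 - \<epsilon>) * s \<le> (X zs ts)^2 + (4 - \<epsilon>) * ts"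
    proof (intro allI impI)
      fix s assume "0 < s \<and> s < ts"
      then have "Q X (zs, s) < m0 + \<epsilon>" using before[OF XF zs] by auto
      then show "(X zs s)^2 + (4 - \<epsilon>) * s \<le> (X zs ts)^2 + (4 - \<epsilon>) * ts"
        using QX unfolding Q_def by simp
    qed
    have pz: "0 < \<phi> zs ts" "0 < a zs ts" "0 < b zs ts" "0 < c zs ts" using pt[OF tsin] by auto
    have oa: "a zs ts \<le> X zs ts" "b zs ts \<le> X zs ts" "c zs ts \<le> X zs ts"
      using cmpz F_def by auto
    note B = big[rule_format, OF tsin, of zs]
    have pdz1: "dt T a zs ts = ds \<phi> (ds \<phi> a) zs ts
            + ds \<phi> a zs ts * (ds \<phi> b zs ts / b zs ts + ds \<phi> c zs ts / c zs ts)
            - 2 * ((a zs ts)^4 - ((b zs ts)^2 - (c zs ts)^2)^2) / (a zs ts * (b zs ts)^2 * (c zs ts)^2)"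
      using B by (elim conjE) assumption
    have pdz2: "dt T b zs ts = ds \<phi> (ds \<phi> b) zs ts
            + ds \<phi> b zs ts * (ds \<phi> a zs ts / a zs ts + ds \<phi> c zs ts / c zs ts)
            - 2 * ((b zs ts)^4 - ((a zs ts)^2 - (c zs ts)^2)^2) / ((a zs ts)^2 * b zs ts * (c zs ts)^2)"
      using B by (elim conjE) assumption
    have pdz3: "dt T c zs ts = ds \<phi> (ds \<phi> c) zs ts
            + ds \<phi> c zs ts * (ds \<phi> a zs ts / a zs ts + ds \<phi> b zs ts / b zs ts)
            - 2 * ((c zs ts)^4 - ((a zs ts)^2 - (b zs ts)^2)^2) / ((a zs ts)^2 * (b zs ts)^2 * c zs ts)"
      using B by (elim conjE) assumption
    have one: "(0::real) < 1" by simp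
    have "X = a \<or> X = b \<or> X = c" using XF F_def by auto
    then show False
    proof (elim disjE)
      assume XX: "X = a"
      show False
        using key_contra[where \<phi>=\<phi> and X=a and Y=b and W=c and zp=zs and tp=ts and T=T, OF sm(2) sm(1) tspos tsT pz(1) pz(2) pz(3) pz(4) oa(2)[unfolded XX] oa(3)[unfolded XX]
             refl pdz1 one lmax[unfolded XX] left[unfolded XX] \<epsilon>] .
    next
      assume XX: "X = b"
      have Dd: "(a zs ts)^2 * b zs ts * (c zs ts)^2 = b zs ts * (a zs ts)^2 * (c zs ts)^2" by (simp only: mult_ac)
      show False
        using key_contra[where \<phi>=\<phi> and X=b and Y=a and W=c and zp=zs and tp=ts and T=T, OF sm(3) sm(1) tspos tsT pz(1) pz(3) pz(2) pz(4) oa(1)[unfolded XX] oa(3)[unfolded XX]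
             Dd pdz2 one lmax[unfolded XX] left[unfolded XX] \<epsilon>] .
    next
      assume XX: "X = c"
      have Dd: "(a zs ts)^2 * (b zs ts)^2 * c zs ts = c zs ts * (a zs ts)^2 * (b zs ts)^2" by (simp only: mult_ac)
      show False
        using key_contra[where \<phi>=\<phi> and X=c and Y=a and W=b and zp=zs and tp=ts and T=T, OF sm(4) sm(1) tspos tsT pz(1) pz(4) pz(2) pz(3) oa(1)[unfolded XX] oa(2)[unfolded XX]
             Dd pdz3 one lmax[unfolded XX] left[unfolded XX] \<epsilon>] .
    qed
  qed
  show ?thesis
  proof (rule ccontr)
    assume "\<not> ?thesis"
    then have Tm: "m0 / 4 < T" unfolding m0_def C0_def by simp
    define t where "t = (m0/4 + T) / 2"
    have m0nn: "0 \<le> m0" unfolding m0_def by simp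
    have t: "0 < t" "t < T" "m0 < 4 * t" using Tm m0nn assms(1) by (auto simp: t_def)
    define \<epsilon> where "\<epsilon> = (4*t - m0) / (2 * (1 + t))"
    have \<epsilon>: "0 < \<epsilon>" using t by (simp add: \<epsilon>_def)
    have "(c 0 t)^2 + (4 - \<epsilon>) * t < m0 + \<epsilon>" using claim[OF \<epsilon>, of t 0] t by auto
    moreover have "0 < (c 0 t)^2" using pt[of t 0] pt[of 0 t] t by auto
    ultimately have "(4 - \<epsilon>) * t < m0 + \<epsilon>" by linarith
    then have "4*t - m0 < \<epsilon> * (1 + t)" by (simp add: algebra_simps)
    also have "\<epsilon> * (1 + t) = (4*t - m0)/2" using t by (simp add: \<epsilon>_def field_simps)
    finally show False using t by simp
  qed
qed

end
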